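(* For every $(\varepsilon,\delta)\in\mathbb{R}^2$, the following relations hold for transformations of the set of marked boxes: $$\sigma_{(-\varepsilon,-\delta)}=\sigma_{(\varepsilon,\delta)}^{-1}\qquad\text{and}\qquad i\,\sigma_{(\varepsilon,\delta)}=\sigma_{(-\varepsilon,-\delta)}\,i.$$
   Context: Let $V$ be a 3-dimensional real vector space. An overmarked box is $\Theta=((p,q,r,s;t,b),(P,Q,R,S;T,B))$ with $p,\dots,b\in\mathbf{P}(V)$ and lines $P,\dots,B$ of $\mathbf{P}(V)$ such that $P=ts$, $Q=tr$, $R=bq$, $S=bp$, $T=pq$, $B=rs$ (here $xy$ is the line through $x,y$) and $T\cap B\notin\{p,q,r,s,t,b\}$. A $\Theta$-basis is a basis of $V$, unique up to scaling, in which $p=[-1:1:0]$, $q=[1:1:0]$, $r=[1:0:1]$, $s=[-1:0:1]$. A marked box is an orbit of $\Theta$ under the involution $j:\Theta\mapsto((q,p,s,r;t,b),(Q,P,S,R;T,B))$. The involution $i$ maps $\Theta$ to $((s,r,p,q;b,t),(R,S,Q,P;B,T))$; it commutes with $j$ and acts on marked boxes. For $(\varepsilon,\delta)\in\mathbb{R}^2$ let $$\Sigma_{(\varepsilon,\delta)}=\begin{pmatrix}1&0&0\\0&e^{-\delta}\cosh\varepsilon&-\sinh\varepsilon\\0&-\sinh\varepsilon&e^{\delta}\cosh\varepsilon\end{pmatrix}$$ and let $\sigma_{(\varepsilon,\delta)}(\Theta)$ be the image of $\Theta$ under the projective transformation with matrix $\Sigma_{(\varepsilon,\delta)}$ in a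 $\Theta$-basis; it commutes with $j$ and thus acts on marked boxes. *)

theory Defs
  imports "HOL-Analysis.Analysis"
begin

text \<open>The 3-dimensional real vector space V is taken to be real^3.
  A point of P(V) is a 1-dimensional subspace, a line of P(V) a 2-dimensional subspace.\<close>

type_synonym psub = "(real^3) set"
type_synonym box = "(psub \<times> psub \<times> psub \<times> psub \<times> psub \<times> psub) \<times>
                    (psub \<times> psub \<times> psub \<times> psub \<times> psub \<times> psub)"

definition is_ppoint :: "psub \<Rightarrow> bool" where
  "is_ppoint x \<longleftrightarrow> (\<exists>v. v \<noteq> 0 \<and> x = span {v})"

definition is_pline :: "psub \<Rightarrow> bool" where
  "is_pline L \<longleftrightarrow> subspace L \<and> dim L = 2"

text \<open>The line xy through two (distinct) points.\<close>
definition join :: "psub \<Rightarrow> psub \<Rightarrow> psub" where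
  "join x y = span (x \<union> y)"

definition overmarked :: "box \<Rightarrow> bool" where
  "overmarked \<Theta> = (case \<Theta> of ((p,q,r,s,t,b),(P,Q,R,S,T,B)) \<Rightarrow>
      is_ppoint p \<and> is_ppoint q \<and> is_ppoint r \<and> is_ppoint s \<and> is_ppoint t \<and> is_ppoint b \<and>
      is_pline P \<and> is_pline Q \<and> is_pline R \<and> is_pline S \<and> is_pline T \<and> is_pline B \<and>
      P = join t s \<and> Q = join t r \<and> R = join b q \<and> S = join b p \<and>
      T = join p q \<and> B = join r s \<and>
      T \<noteq> B \<and> T \<inter> B \<notin> {p, q, r, s, t, b})"

text \<open>Theta-basis, given as the invertible matrix whose columns are the basis vectors;
  the point with homogeneous coordinates c in this basis is span {E *v c}.\<close>
definition theta_basis :: "box \<Rightarrow> real^3^3 \<Rightarrow> bool" where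
  "theta_basis \<Theta> E = (case \<Theta> of ((p,q,r,s,t,b),_) \<Rightarrow>
      invertible E \<and>
      p = span {E *v vector [-1, 1, 0]} \<and> q = span {E *v vector [1, 1, 0]} \<and>
      r = span {E *v vector [1, 0, 1]} \<and> s = span {E *v vector [-1, 0, 1]})"

definition Sig_mat :: "real \<Rightarrow> real \<Rightarrow> real^3^3" where
  "Sig_mat \<epsilon> \<delta> = vector [vector [1, 0, 0],
                           vector [0, exp (-\<delta>) * cosh \<epsilon>, - sinh \<epsilon>],
                           vector [0, - sinh \<epsilon>, exp \<delta> * cosh \<epsilon>]]"

definition map_box :: "(real^3 \<Rightarrow> real^3) \<Rightarrow> box \<Rightarrow> box" where
  "map_box g \<Theta> = (case \<Theta> of ((p,q,r,s,t,b),(P,Q,R,S,T,B)) \<Rightarrow>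
      ((g ` p, g ` q, g ` r, g ` s, g ` t, g ` b),
       (g ` P, g ` Q, g ` R, g ` S, g ` T, g ` B)))"

definition sigma :: "real \<Rightarrow> real \<Rightarrow> box \<Rightarrow> box" where
  "sigma \<epsilon> \<delta> \<Theta> = (let E = (SOME E. theta_basis \<Theta> E) in
      map_box (\<lambda>v. E *v (Sig_mat \<epsilon> \<delta> *v (matrix_inv E *v v))) \<Theta>)"

definition box_j :: "box \<Rightarrow> box" where
  "box_j \<Theta> = (case \<Theta> of ((p,q,r,s,t,b),(P,Q,R,S,T,B)) \<Rightarrow>
      ((q,p,s,r,t,b),(Q,P,S,R,T,B)))"

definition box_i :: "box \<Rightarrow> box" where
  "box_i \<Theta> = (case \<Theta> of ((p,q,r,s,t,b),(P,Q,R,S,T,B)) \<Rightarrow>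
      ((s,r,p,q,b,t),(R,S,Q,P,B,T)))"

text \<open>Marked boxes: orbits of overmarked boxes under the involution j.\<close>
definition marked_boxes :: "box set set" where
  "marked_boxes = {{\<Theta>, box_j \<Theta>} | \<Theta>. overmarked \<Theta>}"

text \<open>Induced action on marked boxes of a map commuting with j.\<close>
definition on_marked :: "(box \<Rightarrow> box) \<Rightarrow> box set \<Rightarrow> box set" where
  "on_marked f M = f ` M"

end

theory Submission
  imports Defs
begin

definition det3 :: "real^3 \<Rightarrow> real^3 \<Rightarrow> real^3 \<Rightarrow> real" where
  "det3 u v w = u$1 * v$2 * w$3 + u$2 * v$3 * w$1 + u$3 * v$1 * w$2 - u$1 * v$3 * w$2 - u$2 * v$1 * w$3 - u$3 * v$2 * w$1"

lemma det3_cyc: "det3 w u v = det3 u v w"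
  unfolding det3_def by (simp add: algebra_simps)

lemma four_rel:
  "det3 b c d *\<^sub>R a - det3 a c d *\<^sub>R b + det3 a b d *\<^sub>R c - det3 a b c *\<^sub>R d = 0"
  unfolding det3_def by (simp add: vec_eq_iff forall_3 algebra_simps)

lemma det3_lin: "a * det3 u v w = det3 (a *\<^sub>R u + b *\<^sub>R v + c *\<^sub>R w) v w"
  unfolding det3_def by (simp add: algebra_simps)

lemma det3_comb: "a *\<^sub>R u + b *\<^sub>R v + c *\<^sub>R w = 0 \<Longrightarrow> a * det3 u v w = 0"
proof -
  assume h: "a *\<^sub>R u + b *\<^sub>R v + c *\<^sub>R w = 0"
  have "a * det3 u v w = det3 (a *\<^sub>R u + b *\<^sub>R v + c *\<^sub>R w) v w" by (rule det3_lin)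
  then show ?thesis using h by (simp add: det3_def)
qed

lemma mv3: "(transpose (vector [u,v,w] :: real^3^3)) *v x = (x$1) *\<^sub>R u + (x$2) *\<^sub>R v + (x$3) *\<^sub>R w"
  by (simp add: vec_eq_iff forall_3 matrix_vector_mult_def transpose_def sum_3 mult.commute)

lemma det3_det: "det (transpose (vector [u,v,w] :: real^3^3)) = det3 u v w"
  by (simp add: det_3 det3_def transpose_def algebra_simps)

lemma det3_zero:
  assumes "det3 u v w = 0"
  shows "\<exists>a b c. (a \<noteq> 0 \<or> b \<noteq> 0 \<or> c \<noteq> 0) \<and> a *\<^sub>R u + b *\<^sub>R v + c *\<^sub>R w = 0"
proof (rule ccontr)
  let ?A = "transpose (vector [u,v,w] :: real^3^3)"
  assume H: "\<not> ?thesis"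
  have "\<forall>x. ?A *v x = 0 \<longrightarrow> x = 0"
  proof (intro allI impI)
    fix x assume "?A *v x = 0"
    then have "(x$1) *\<^sub>R u + (x$2) *\<^sub>R v + (x$3) *\<^sub>R w = 0" by (simp only: mv3)
    then have "x$1 = 0 \<and> x$2 = 0 \<and> x$3 = 0" using H by blast
    then show "x = 0" by (simp add: vec_eq_iff forall_3)
  qed
  then obtain B where "B ** ?A = mat 1" using matrix_left_invertible_ker by blast
  then have "det B * det ?A = 1" by (metis det_I det_mul)
  then have "det B * det3 u v w = 1" by (simp only: det3_det)
  then show False using assms by (metis mult_zero_right zero_neq_one)
qed

lemma pair_indep:
  fixes x y :: "real^3"
  assumes d: "dim (span {x,y}) = 2" and h: "a *\<^sub>R x + b *\<^sub>R y = 0"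
  shows "a = 0 \<and> b = 0"
proof (rule ccontr)
  assume "\<not> (a = 0 \<and> b = 0)"
  then consider "a \<noteq> 0" | "b \<noteq> 0" by blast
  then show False
  proof cases
    case 1
    have e: "a *\<^sub>R x = - (b *\<^sub>R y)" using h by (simp add: eq_neg_iff_add_eq_0)
    have "x = (1/a) *\<^sub>R (a *\<^sub>R x)" using 1 by simp
    also have "\<dots> = (- b / a) *\<^sub>R y" unfolding e by simp
    finally have "x = (- b / a) *\<^sub>R y" .
    then have xin: "x \<in> span {y}" by (metis span_scale span_base singletonI)
    then have "{x,y} \<subseteq> span {y}" by (auto intro: span_base)
    then have "dim {x,y} \<le> card {y}" by (intro dim_le_card) auto
    then show False using d by simp
  next
    case 2
    have e: "b *\<^sub>R y = - (a *\<^sub>R x)" using h by (simp add: eq_neg_iff_add_eq_0 add.commute)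
    have "y = (1/b) *\<^sub>R (b *\<^sub>R y)" using 2 by simp
    also have "\<dots> = (- a / b) *\<^sub>R x" unfolding e by simp
    finally have "y = (- a / b) *\<^sub>R x" .
    then have xin: "y \<in> span {x}" by (metis span_scale span_base singletonI)
    then have "{x,y} \<subseteq> span {x}" by (auto intro: span_base)
    then have "dim {x,y} \<le> card {x}" by (intro dim_le_card) auto
    then show False using d by simp
  qed
qed

lemma line_meet:
  fixes T B :: "(real^3) set"
  assumes "subspace T" "subspace B" "dim T = 2" "dim B = 2" "T \<noteq> B"
    "z \<in> T" "z \<in> B" "z \<noteq> 0"
  shows "T \<inter> B = span {z}"
proof -
  have sub: "subspace (T \<inter> B)" using assms by (simp add: subspace_inter)
  have "dim (T \<inter> B) < 2"
  proof (rule ccontr)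
    assume "\<not> dim (T \<inter> B) < 2"
    then have "T \<inter> B = T" using subspace_dim_equal[OF sub \<open>subspace T\<close>] assms by auto
    then have "T \<subseteq> B" by blast
    then have "T = B" using subspace_dim_equal[OF \<open>subspace T\<close> \<open>subspace B\<close>] assms by auto
    then show False using assms by simp
  qed
  have "span {z} \<subseteq> T \<inter> B" using assms sub by (simp add: span_minimal)
  moreover have "dim (T \<inter> B) \<le> dim (span {z})" using \<open>dim (T \<inter> B) < 2\<close> assms by simp
  ultimately show ?thesis using subspace_dim_equal[OF subspace_span[of "{z}"] sub] assms(8) by simp
qed

lemma noncoll:
  fixes x y z :: "real^3"
  assumes d: "dim (span{x,y}) = 2" and B: "subspace B" "dim B = 2" and ne: "span{x,y} \<noteq> B"
    and z: "z \<in> B" "z \<noteq> 0" and m: "span{x,y} \<inter> B \<noteq> span{z}"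
  shows "det3 x y z \<noteq> 0"
proof
  assume "det3 x y z = 0"
  then obtain a b c where abc: "a \<noteq> 0 \<or> b \<noteq> 0 \<or> c \<noteq> 0" "a *\<^sub>R x + b *\<^sub>R y + c *\<^sub>R z = 0"
    using det3_zero by blast
  show False
  proof (cases "c = 0")
    case True
    then show False using pair_indep[OF d, of a b] abc by simp
  next
    case False
    have "z = (- a / c) *\<^sub>R x + (- b / c) *\<^sub>R y"
    proof -
      have e: "c *\<^sub>R z = - (a *\<^sub>R x + b *\<^sub>R y)" by (metis abc(2) add.commute eq_neg_iff_add_eq_0)
      have "z = (1/c) *\<^sub>R (c *\<^sub>R z)" using False by simp
      also have "\<dots> = (- a / c) *\<^sub>R x + (- b / c) *\<^sub>R y" unfolding e by (simp add: scaleR_add_right scaleR_diff_right)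
      finally show ?thesis .
    qed
    moreover have "x \<in> span {x,y}" "y \<in> span {x,y}" by (auto intro: span_base)
    ultimately have "z \<in> span {x,y}" by (metis span_add span_scale)
    then show False using line_meet[OF subspace_span B(1) _ B(2) ne _ z] d m by simp
  qed
qed

lemma det3_aux1: "det3 (k *\<^sub>R (b *\<^sub>R q - a *\<^sub>R p)) (k *\<^sub>R (a *\<^sub>R p + b *\<^sub>R q)) w = -(2*k*k*a*b) * det3 p q w"
  unfolding det3_def by (simp add: algebra_simps)

lemma det3_aux2: "det3 p q (k *\<^sub>R (c *\<^sub>R r + d *\<^sub>R s)) = k * (c * det3 p q r + d * det3 p q s)"
  unfolding det3_def by (simp add: algebra_simps)

lemma span_scale_eq:
  fixes v :: "real^3"
  assumes "k \<noteq> 0" shows "span {k *\<^sub>R v} = span {v}"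
proof -
  have "k *\<^sub>R v \<in> span {v}" by (simp add: span_base span_scale)
  moreover have "v \<in> span {k *\<^sub>R v}"
  proof -
    have "v = (1/k) *\<^sub>R (k *\<^sub>R v)" using assms by simp
    then show ?thesis by (metis span_scale span_base singletonI)
  qed
  ultimately show ?thesis by (simp add: span_eq)
qed

lemma join_span: "join (span {u}) (span {v}) = span {u,v}"
  unfolding join_def
proof (subst span_eq, intro conjI)
  show "span {u} \<union> span {v} \<subseteq> span {u, v}" by (auto intro: span_mono[THEN subsetD])
  show "{u, v} \<subseteq> span (span {u} \<union> span {v})"
    by (auto intro!: span_base simp: span_base)
qed

lemma theta_exists:
  assumes om: "overmarked \<Theta>"
  shows "\<exists>E. theta_basis \<Theta> E"
proof -
  obtain p q r s t b P Q R S T B where th: "\<Theta> = ((p,q,r,s,t,b),(P,Q,R,S,T,B))"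
    by (metis prod.collapse)
  note om' = om[unfolded th overmarked_def prod.case]
  have "is_ppoint p" using om' by (elim conjE) assumption
  then obtain vp where vp: "vp \<noteq> 0" "p = span {vp}" unfolding is_ppoint_def by blast
  have "is_ppoint q" using om' by (elim conjE) assumption
  then obtain vq where vq: "vq \<noteq> 0" "q = span {vq}" unfolding is_ppoint_def by blast
  have "is_ppoint r" using om' by (elim conjE) assumption
  then obtain vr where vr: "vr \<noteq> 0" "r = span {vr}" unfolding is_ppoint_def by blast
  have "is_ppoint s" using om' by (elim conjE) assumption
  then obtain vs where vs: "vs \<noteq> 0" "s = span {vs}" unfolding is_ppoint_def by blast
  have "T = join p q" using om' by (elim conjE) assumption
  then have T: "T = span {vp, vq}" using vp vq join_span by simp
  have "B = join r s" using om' by (elim conjE) assumption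
  then have B: "B = span {vr, vs}" using vr vs join_span by simp
  have "is_pline T" using om' by (elim conjE) assumption
  moreover have "is_pline B" using om' by (elim conjE) assumption
  moreover have "T \<noteq> B" using om' by (elim conjE) assumption
  ultimately have dT: "dim (span {vp, vq}) = 2" and dB: "dim (span {vr, vs}) = 2"
    and TB: "span {vp, vq} \<noteq> span {vr, vs}" using T B is_pline_def by auto
  have nin: "T \<inter> B \<notin> {p, q, r, s, t, b}" using om' by (elim conjE) assumption
  have "T \<inter> B \<noteq> p" "T \<inter> B \<noteq> q" "T \<inter> B \<noteq> r" "T \<inter> B \<noteq> s" using nin by blast+
  then have mp: "span {vp, vq} \<inter> span {vr, vs} \<noteq> span {vp}"
    and mq: "span {vp, vq} \<inter> span {vr, vs} \<noteq> span {vq}"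
    and mr: "span {vp, vq} \<inter> span {vr, vs} \<noteq> span {vr}"
    and ms: "span {vp, vq} \<inter> span {vr, vs} \<noteq> span {vs}"
    using T B vp(2) vq(2) vr(2) vs(2) by simp_all
  have i1: "vr \<in> span {vr, vs}" "vs \<in> span {vr, vs}" "vp \<in> span {vp, vq}" "vq \<in> span {vp, vq}"
    by (simp_all add: span_base)
  have "det3 vp vq vr \<noteq> 0"
    by (rule noncoll[OF dT subspace_span dB TB i1(1) vr(1) mr])
  moreover have "det3 vp vq vs \<noteq> 0"
    by (rule noncoll[OF dT subspace_span dB TB i1(2) vs(1) ms])
  moreover have "det3 vr vs vp \<noteq> 0"
    by (rule noncoll[OF dB subspace_span dT TB[symmetric] i1(3) vp(1)]) (simp add: Int_commute mp)
  moreover have "det3 vr vs vq \<noteq> 0"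
    by (rule noncoll[OF dB subspace_span dT TB[symmetric] i1(4) vq(1)]) (simp add: Int_commute mq)
  ultimately have nz: "det3 vq vr vs \<noteq> 0" "det3 vp vr vs \<noteq> 0" "det3 vp vq vs \<noteq> 0" "det3 vp vq vr \<noteq> 0"
    by (simp_all add: det3_cyc[of vp vr vs, symmetric] det3_cyc[of vq vr vs, symmetric])
  define a where "a = det3 vq vr vs"
  define bb where "bb = det3 vp vr vs"
  define c where "c = det3 vp vq vs"
  define d where "d = det3 vp vq vr"
  have rel: "a *\<^sub>R vp - bb *\<^sub>R vq + c *\<^sub>R vr - d *\<^sub>R vs = 0"
    unfolding a_def bb_def c_def d_def by (rule four_rel)
  then have relc: "a * vp$i - bb * vq$i + c * vr$i - d * vs$i = 0" for i
    by (simp add: vec_eq_iff)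
  define c1 where "c1 = (1/2) *\<^sub>R (bb *\<^sub>R vq - a *\<^sub>R vp)"
  define c2 where "c2 = (1/2) *\<^sub>R (a *\<^sub>R vp + bb *\<^sub>R vq)"
  define c3 where "c3 = (1/2) *\<^sub>R (c *\<^sub>R vr + d *\<^sub>R vs)"
  define E where "E = transpose (vector [c1, c2, c3] :: real^3^3)"
  have "det E = det3 c1 c2 c3" unfolding E_def by (rule det3_det)
  also have "\<dots> = (1/2) * (-(2*(1/2)*(1/2)*a*bb)) * (c * d + d * c)"
    unfolding c1_def c2_def c3_def det3_aux1 det3_aux2 by (simp add: c_def d_def)
  finally have "det E \<noteq> 0" using nz by (simp add: a_def bb_def c_def d_def)
  then have inv: "invertible E" by (simp add: invertible_det_nz)
  have e1: "E *v vector [-1, 1, 0] = a *\<^sub>R vp"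
    unfolding E_def mv3 c1_def c2_def by (simp add: vec_eq_iff algebra_simps)
  have e2: "E *v vector [1, 1, 0] = bb *\<^sub>R vq"
    unfolding E_def mv3 c1_def c2_def by (simp add: vec_eq_iff algebra_simps)
  have e3: "E *v vector [1, 0, 1] = c *\<^sub>R vr"
  proof -
    have "(E *v vector [1, 0, 1]) $ i = (c *\<^sub>R vr) $ i" for i
      unfolding E_def mv3 c1_def c3_def using relc[of i] by (simp add: algebra_simps; linarith)
    then show ?thesis by (simp add: vec_eq_iff)
  qed
  have e4: "E *v vector [-1, 0, 1] = d *\<^sub>R vs"
  proof -
    have "(E *v vector [-1, 0, 1]) $ i = (d *\<^sub>R vs) $ i" for i
      unfolding E_def mv3 c1_def c3_def using relc[of i] by (simp add: algebra_simps; linarith)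
    then show ?thesis by (simp add: vec_eq_iff)
  qed
  have "theta_basis \<Theta> E"
    unfolding th theta_basis_def using inv e1 e2 e3 e4 nz vp vq vr vs
    by (simp add: span_scale_eq a_def bb_def c_def d_def)
  then show ?thesis by blast
qed

lemma in_span1: fixes x y :: "real^3" assumes "x \<in> span {y}" shows "\<exists>k. x = k *\<^sub>R y"
  using assms by (auto simp: span_singleton)

lemma minv: assumes "invertible (A::real^3^3)"
  shows "A ** matrix_inv A = mat 1" "matrix_inv A ** A = mat 1"
proof -
  have "\<exists>A'. A ** A' = mat 1 \<and> A' ** A = mat 1" using assms by (simp add: invertible_def)
  from someI_ex[OF this] show "A ** matrix_inv A = mat 1" "matrix_inv A ** A = mat 1"
    unfolding matrix_inv_def by blast+
qed

lemma minv_unique: assumes "(A::real^3^3) ** B = mat 1" shows "matrix_inv A = B" "invertible A"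
proof -
  have BA: "B ** A = mat 1" using assms matrix_left_right_inverse by blast
  then show inv: "invertible A" using assms invertible_def by blast
  have "matrix_inv A = matrix_inv A ** (A ** B)" using assms by simp
  also have "\<dots> = (matrix_inv A ** A) ** B" by (simp add: matrix_mul_assoc)
  also have "\<dots> = B" using minv[OF inv] by simp
  finally show "matrix_inv A = B" .
qed

lemma coef_lemma:
  fixes E E' :: "real^3^3" and u :: "real^3"
  assumes "span {E' *v u} = span {E *v u}"
  shows "\<exists>k. E' *v u = k *\<^sub>R (E *v u)"
proof -
  have "E' *v u \<in> span {E *v u}" using assms span_base[of "E' *v u" "{E' *v u}"] by simp
  then show ?thesis by (rule in_span1)
qed

lemma theta_unique:
  assumes h1: "theta_basis \<Theta> E" and h2: "theta_basis \<Theta> E'"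
  shows "\<exists>k. k \<noteq> 0 \<and> E' = k *\<^sub>R E"
proof -
  obtain p q r s t b P Q R S T B where th: "\<Theta> = ((p,q,r,s,t,b),(P,Q,R,S,T,B))"
    by (metis prod.collapse)
  note a1 = h1[unfolded th theta_basis_def, simplified]
  note a2 = h2[unfolded th theta_basis_def, simplified]
  define up where "up = (vector [-1, 1, 0] :: real^3)"
  define uq where "uq = (vector [1, 1, 0] :: real^3)"
  define ur where "ur = (vector [1, 0, 1] :: real^3)"
  define us where "us = (vector [-1, 0, 1] :: real^3)"
  obtain kp where kp: "E' *v up = kp *\<^sub>R (E *v up)" using coef_lemma a1 a2 unfolding up_def by metis
  obtain kq where kq: "E' *v uq = kq *\<^sub>R (E *v uq)" using coef_lemma a1 a2 unfolding uq_def by metis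
  obtain kr where kr: "E' *v ur = kr *\<^sub>R (E *v ur)" using coef_lemma a1 a2 unfolding ur_def by metis
  obtain ks where ks: "E' *v us = ks *\<^sub>R (E *v us)" using coef_lemma a1 a2 unfolding us_def by metis
  have "uq - up = ur - us" unfolding up_def uq_def ur_def us_def by (simp add: vec_eq_iff forall_3)
  then have "E' *v (uq - up) = E' *v (ur - us)" by simp
  then have "E *v (kq *\<^sub>R uq - kp *\<^sub>R up) = E *v (kr *\<^sub>R ur - ks *\<^sub>R us)"
    using kp kq kr ks by (simp add: algebra_simps)
  then have "kq *\<^sub>R uq - kp *\<^sub>R up = kr *\<^sub>R ur - ks *\<^sub>R us"
    using inj_matrix_vector_mult[of E] a1 by (auto dest: injD)
  then have eqs: "kq = kp" "kr = kp" "ks = kp"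
    unfolding up_def uq_def ur_def us_def by (auto simp: vec_eq_iff forall_3)
  have all: "E' *v x = kp *\<^sub>R (E *v x)" for x
  proof -
    have x: "x = ((x$2 - x$1 + x$3)/2) *\<^sub>R up + ((x$1 + x$2 - x$3)/2) *\<^sub>R uq + (x$3) *\<^sub>R ur"
      unfolding up_def uq_def ur_def by (simp add: vec_eq_iff forall_3 field_simps)
    show ?thesis
      by (subst (1 2) x) (simp add: algebra_simps kp kq kr eqs)
  qed
  have "E' = kp *\<^sub>R E" unfolding matrix_eq
    using all by (simp add: scaleR_matrix_vector_assoc)
  moreover have "kp \<noteq> 0"
  proof
    assume "kp = 0"
    then have "E' *v up = E' *v 0" using all by simp
    moreover have "invertible E'" using a2 by blast
    ultimately have "up = 0" using injD[OF inj_matrix_vector_mult[of E']] by blast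
    then show False unfolding up_def by (simp add: vec_eq_iff forall_3)
  qed
  ultimately show ?thesis by blast
qed

definition Dm :: "real^3^3" where
  "Dm = vector [vector [-1, 0, 0], vector [0, 1, 0], vector [0, 0, 1]]"
definition Mm :: "real^3^3" where
  "Mm = vector [vector [1, 0, 0], vector [0, 0, -1], vector [0, 1, 0]]"
definition Mi :: "real^3^3" where
  "Mi = vector [vector [1, 0, 0], vector [0, 0, 1], vector [0, -1, 0]]"

lemma cs1: "cosh x * cosh x - sinh x * sinh x = (1::real)"
  using cosh_square_eq[of x] by (simp add: power2_eq_square)

lemma exp_m: "exp (-x) * exp x = (1::real)" "exp x * exp (-x) = (1::real)"
  by (simp_all add: exp_minus field_simps)

lemma ex2: "exp (-d) * a * (exp d * b) = a * (b::real)" "exp d * a * (exp (-d) * b) = a * (b::real)"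
proof -
  have "exp (-d) * a * (exp d * b) = (exp (-d) * exp d) * (a * b)" by (simp only: ac_simps)
  then show "exp (-d) * a * (exp d * b) = a * (b::real)" by (simp add: exp_m)
  have "exp d * a * (exp (-d) * b) = (exp d * exp (-d)) * (a * b)" by (simp only: ac_simps)
  then show "exp d * a * (exp (-d) * b) = a * (b::real)" by (simp add: exp_m)
qed

lemma S1: "Sig_mat e d ** Sig_mat (-e) (-d) = mat 1"
  unfolding Sig_mat_def
  by (simp add: matrix_matrix_mult_def mat_def vec_eq_iff forall_3 sum_3 ex2 cs1)

lemma S2: "Dm ** Sig_mat e d ** Dm = Sig_mat e d"
  unfolding Sig_mat_def Dm_def
  by (simp add: matrix_matrix_mult_def vec_eq_iff forall_3 sum_3)

lemma S3: "Mm ** Sig_mat (-e) (-d) ** Mi = Sig_mat e d"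
  unfolding Sig_mat_def Mm_def Mi_def
  by (simp add: matrix_matrix_mult_def vec_eq_iff forall_3 sum_3)

lemma DD: "Dm ** Dm = mat 1"
  unfolding Dm_def by (simp add: matrix_matrix_mult_def mat_def vec_eq_iff forall_3 sum_3)

lemma MMi: "Mm ** Mi = mat 1"
  unfolding Mm_def Mi_def by (simp add: matrix_matrix_mult_def mat_def vec_eq_iff forall_3 sum_3)

lemma box_cases:
  obtains p q r s t b P Q R S T B where "\<Theta> = ((p,q,r,s,t,b),(P,Q,R,S,T,B))"
  by (metis prod.collapse)

lemma theta_inv: "theta_basis \<Theta> E \<Longrightarrow> invertible E"
  by (cases \<Theta> rule: box_cases) (simp add: theta_basis_def)

lemma smv: "(c *\<^sub>R (A::real^3^3)) *v v = c *\<^sub>R (A *v v)"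
  by (simp add: scaleR_matrix_vector_assoc)

lemma smm: "(a *\<^sub>R (A::real^3^3)) ** (b *\<^sub>R B) = (a * b) *\<^sub>R (A ** B)"
  by (simp add: matrix_matrix_mult_def vec_eq_iff sum_distrib_left mult_ac scaleR_sum_right)

lemma sigma_eq:
  assumes th: "theta_basis \<Theta> E"
  shows "sigma e d \<Theta> = map_box ((*v) (E ** Sig_mat e d ** matrix_inv E)) \<Theta>"
proof -
  define E0 where "E0 = (SOME E. theta_basis \<Theta> E)"
  have "theta_basis \<Theta> E0" unfolding E0_def using th by (rule someI)
  then obtain k where k: "k \<noteq> 0" "E0 = k *\<^sub>R E" using theta_unique[OF th] by blast
  have invE: "invertible E" using th by (rule theta_inv)
  have "E0 ** ((1/k) *\<^sub>R matrix_inv E) = mat 1"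
    unfolding k(2) smm using k(1) minv(1)[OF invE] by simp
  then have iE0: "matrix_inv E0 = (1/k) *\<^sub>R matrix_inv E" by (rule minv_unique)
  have "sigma e d \<Theta> = map_box (\<lambda>v. E0 *v (Sig_mat e d *v (matrix_inv E0 *v v))) \<Theta>"
    by (simp add: sigma_def Let_def E0_def)
  also have "(\<lambda>v. E0 *v (Sig_mat e d *v (matrix_inv E0 *v v))) = (*v) (E ** Sig_mat e d ** matrix_inv E)"
  proof (rule ext)
    fix v
    have "E0 *v (Sig_mat e d *v (matrix_inv E0 *v v)) = (k *\<^sub>R E) *v (Sig_mat e d *v (((1/k) *\<^sub>R matrix_inv E) *v v))"
      unfolding iE0 by (simp only: k(2))
    also have "\<dots> = (k * (1/k)) *\<^sub>R (E *v (Sig_mat e d *v (matrix_inv E *v v)))"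
      by (simp only: smv matrix_vector_mult_scaleR scaleR_scaleR mult.commute)
    also have "\<dots> = (E ** Sig_mat e d ** matrix_inv E) *v v"
      using k(1) by (simp add: matrix_vector_mul_assoc matrix_mul_assoc)
    finally show "E0 *v (Sig_mat e d *v (matrix_inv E0 *v v)) = (E ** Sig_mat e d ** matrix_inv E) *v v" .
  qed
  finally show ?thesis .
qed

lemma map_box_comp: "map_box f (map_box g \<Theta>) = map_box (f \<circ> g) \<Theta>"
  by (cases \<Theta> rule: box_cases) (simp add: map_box_def image_comp)

lemma map_box_id: "map_box (\<lambda>v. v) \<Theta> = \<Theta>"
  by (cases \<Theta> rule: box_cases) (simp add: map_box_def)

lemma map_box_j: "box_j (map_box f \<Theta>) = map_box f (box_j \<Theta>)"
  by (cases \<Theta> rule: box_cases) (simp add: map_box_def box_j_def)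

lemma map_box_i: "box_i (map_box f \<Theta>) = map_box f (box_i \<Theta>)"
  by (cases \<Theta> rule: box_cases) (simp add: map_box_def box_i_def)

lemma img_span1: "(*v) (F::real^3^3) ` span {w} = span {F *v w}"
  using span_linear_image[OF matrix_vector_mul_linear, of F "{w}"] by simp

lemma theta_map:
  assumes "theta_basis \<Theta> E" "invertible F"
  shows "theta_basis (map_box ((*v) F) \<Theta>) (F ** E)"
  using assms
  by (cases \<Theta> rule: box_cases) (simp add: theta_basis_def map_box_def img_span1 matrix_vector_mul_assoc invertible_mult)

lemma Dmv: "Dm *v vector [-1, 1, 0] = vector [1, 1, 0]" "Dm *v vector [1, 1, 0] = vector [-1, 1, 0]"
  "Dm *v vector [1, 0, 1] = vector [-1, 0, 1]" "Dm *v vector [-1, 0, 1] = vector [1, 0, 1]"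
  unfolding Dm_def by (simp_all add: matrix_vector_mult_def vec_eq_iff forall_3 sum_3)

lemma Mmv: "Mm *v vector [-1, 1, 0] = vector [-1, 0, 1]" "Mm *v vector [1, 1, 0] = vector [1, 0, 1]"
  "Mm *v vector [1, 0, 1] = (-1) *\<^sub>R vector [-1, 1, 0]" "Mm *v vector [-1, 0, 1] = (-1) *\<^sub>R vector [1, 1, 0]"
  unfolding Mm_def by (simp_all add: matrix_vector_mult_def vec_eq_iff forall_3 sum_3)

lemma invDm: "invertible Dm" using minv_unique(2)[OF DD] .
lemma invMm: "invertible Mm" using minv_unique(2)[OF MMi] .

lemma theta_j:
  assumes "theta_basis \<Theta> E"
  shows "theta_basis (box_j \<Theta>) (E ** Dm)"
proof -
  have a: "(E ** Dm) *v x = E *v (Dm *v x)" for x by (simp add: matrix_vector_mul_assoc)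
  show ?thesis using assms
    by (cases \<Theta> rule: box_cases) (simp add: theta_basis_def box_j_def a Dmv invertible_mult invDm)
qed

lemma theta_i:
  assumes "theta_basis \<Theta> E"
  shows "theta_basis (box_i \<Theta>) (E ** Mm)"
proof -
  have a: "(E ** Mm) *v x = E *v (Mm *v x)" for x by (simp add: matrix_vector_mul_assoc)
  have b: "span {E *v ((-1) *\<^sub>R x)} = span {E *v x}" for x
  proof -
    have "span {(-1::real) *\<^sub>R (E *v x)} = span {E *v x}" by (rule span_scale_eq) simp
    then show ?thesis by (simp only: matrix_vector_mult_scaleR)
  qed
  have b2: "span {E *v (- x)} = span {E *v x}" for x
    using b[of x] by simp
  show ?thesis using assms
    by (cases \<Theta> rule: box_cases)
      (simp add: theta_basis_def box_i_def a Mmv b2 invertible_mult invMm)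
qed





lemma over_map:
  assumes om: "overmarked \<Theta>" and invF: "invertible F"
  shows "overmarked (map_box ((*v) F) \<Theta>)"
proof -
  let ?f = "(*v) F"
  have lin: "linear ?f" by (rule matrix_vector_mul_linear)
  have inj: "inj ?f" using invF by (rule inj_matrix_vector_mult)
  have pp: "is_ppoint (?f ` x)" if px: "is_ppoint x" for x
  proof -
    obtain v where v: "v \<noteq> 0" "x = span {v}" using px unfolding is_ppoint_def by blast
    have nz: "F *v v \<noteq> 0"
    proof
      assume "F *v v = 0"
      then have "F *v v = F *v 0" by simp
      then have "v = 0" using injD[OF inj] by blast
      then show False using v(1) by simp
    qed
    have "?f ` x = span {F *v v}" unfolding v(2) by (rule img_span1)
    then show ?thesis unfolding is_ppoint_def using nz by blast
  qed
  have pl: "is_pline (?f ` L)" if "is_pline L" for L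
  proof -
    have "subspace L" "dim L = 2" using that is_pline_def by auto
    moreover have "dim (?f ` L) = dim L" using lin inj by (metis dim_image_eq inj_on_subset subset_UNIV)
    moreover have "subspace (?f ` L)" using lin \<open>subspace L\<close> by (rule linear_subspace_image)
    ultimately show ?thesis unfolding is_pline_def by simp
  qed
  have jn: "?f ` join x y = join (?f ` x) (?f ` y)" for x y
    unfolding join_def using span_linear_image[OF lin, of "x \<union> y"] by (simp add: image_Un)
  have ne: "?f ` X \<noteq> ?f ` Y" if "X \<noteq> Y" for X Y using that inj_image_eq_iff[OF inj] by blast
  have it: "?f ` X \<inter> ?f ` Y = ?f ` (X \<inter> Y)" for X Y using image_Int[OF inj] by blast
  obtain p q r s t b P Q R S T B where th: "\<Theta> = ((p,q,r,s,t,b),(P,Q,R,S,T,B))"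
    by (rule box_cases)
  note om' = om[unfolded th overmarked_def prod.case]
  have "is_ppoint p" using om' by (elim conjE) assumption
  moreover have "is_ppoint q" using om' by (elim conjE) assumption
  moreover have "is_ppoint r" using om' by (elim conjE) assumption
  moreover have "is_ppoint s" using om' by (elim conjE) assumption
  moreover have "is_ppoint t" using om' by (elim conjE) assumption
  moreover have "is_ppoint b" using om' by (elim conjE) assumption
  moreover have "is_pline P" using om' by (elim conjE) assumption
  moreover have "is_pline Q" using om' by (elim conjE) assumption
  moreover have "is_pline R" using om' by (elim conjE) assumption
  moreover have "is_pline S" using om' by (elim conjE) assumption
  moreover have "is_pline T" using om' by (elim conjE) assumption
  moreover have "is_pline B" using om' by (elim conjE) assumption
  moreover have "P = join t s" using om' by (elim conjE) assumption
  moreover have "Q = join t r" using om' by (elim conjE) assumption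
  moreover have "R = join b q" using om' by (elim conjE) assumption
  moreover have "S = join b p" using om' by (elim conjE) assumption
  moreover have "T = join p q" using om' by (elim conjE) assumption
  moreover have "B = join r s" using om' by (elim conjE) assumption
  moreover have "T \<noteq> B" using om' by (elim conjE) assumption
  moreover have "T \<inter> B \<notin> {p, q, r, s, t, b}" using om' by (elim conjE) assumption
  then have "?f ` (T \<inter> B) \<notin> {?f ` p, ?f ` q, ?f ` r, ?f ` s, ?f ` t, ?f ` b}"
    using inj_image_eq_iff[OF inj] by auto
  ultimately show ?thesis unfolding th map_box_def prod.case overmarked_def
    using pp pl jn[symmetric] ne it by simp
qed

lemma r1: "(A::real^3^3) ** B = mat 1 \<Longrightarrow> A ** (B ** X) = (X::real^3^3)"
  by (metis matrix_mul_assoc[symmetric] matrix_mul_lid)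

lemma S1r: "Sig_mat e d ** (Sig_mat (-e) (-d) ** X) = (X::real^3^3)"
  by (rule r1[OF S1])
lemma S1r': "Sig_mat (-e) (-d) ** (Sig_mat e d ** X) = (X::real^3^3)"
  using r1[OF S1[of "-e" "-d"]] by simp
lemma S2r: "Dm ** (Sig_mat e d ** (Dm ** X)) = Sig_mat e d ** (X::real^3^3)"
  using S2[of e d] by (metis matrix_mul_assoc[symmetric])
lemma S3r: "Mm ** (Sig_mat (-e) (-d) ** (Mi ** X)) = Sig_mat e d ** (X::real^3^3)"
  using S3[of e d] by (metis matrix_mul_assoc[symmetric])

lemma invSig: "invertible (Sig_mat e d)" using minv_unique(2)[OF S1] .

lemma map_box_mat: "map_box ((*v) A) (map_box ((*v) B) \<Theta>) = map_box ((*v) (A ** B)) \<Theta>"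
proof -
  have "(*v) A \<circ> (*v) B = (*v) (A ** B)" by (rule ext) (simp add: matrix_vector_mul_assoc)
  then show ?thesis by (simp add: map_box_comp)
qed

lemma map_box_one: "map_box ((*v) (mat 1 :: real^3^3)) \<Theta> = \<Theta>"
proof -
  have "(*v) (mat 1 :: real^3^3) = (\<lambda>v. v)" by (rule ext) simp
  then show ?thesis by (simp add: map_box_id)
qed

lemma P1:
  assumes th: "theta_basis \<Theta> E"
  shows "sigma (-e) (-d) (sigma e d \<Theta>) = \<Theta>"
proof -
  have invE: "invertible E" using th by (rule theta_inv)
  note mi = minv[OF invE]
  have miE: "matrix_inv E ** (E ** X) = X" "E ** (matrix_inv E ** X) = X" for X :: "real^3^3"
    by (rule r1[OF mi(2)], rule r1[OF mi(1)])
  define G where "G = E ** Sig_mat e d ** matrix_inv E"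
  have s1: "sigma e d \<Theta> = map_box ((*v) G) \<Theta>" unfolding G_def by (rule sigma_eq[OF th])
  have invG: "invertible G" unfolding G_def
    by (intro invertible_mult invE invSig) (metis invertible_def mi)
  have GE: "G ** E = E ** Sig_mat e d" unfolding G_def by (simp add: matrix_mul_assoc[symmetric] miE mi)
  have th2: "theta_basis (sigma e d \<Theta>) (E ** Sig_mat e d)"
    unfolding s1 GE[symmetric] by (rule theta_map[OF th invG])
  have "(E ** Sig_mat e d) ** (Sig_mat (-e) (-d) ** matrix_inv E) = mat 1"
    by (simp add: matrix_mul_assoc[symmetric] S1r mi)
  then have inv2: "matrix_inv (E ** Sig_mat e d) = Sig_mat (-e) (-d) ** matrix_inv E"
    by (rule minv_unique)
  have "sigma (-e) (-d) (sigma e d \<Theta>) =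
     map_box ((*v) ((E ** Sig_mat e d) ** Sig_mat (-e) (-d) ** (Sig_mat (-e) (-d) ** matrix_inv E))) (map_box ((*v) G) \<Theta>)"
    using sigma_eq[OF th2, of "-e" "-d"] s1 inv2 by simp
  also have "\<dots> = map_box ((*v) (mat 1)) \<Theta>"
    unfolding map_box_mat G_def by (simp add: matrix_mul_assoc[symmetric] S1r S1r' miE mi)
  finally show ?thesis by (simp add: map_box_one)
qed

lemma P2:
  assumes th: "theta_basis \<Theta> E"
  shows "sigma e d (box_j \<Theta>) = box_j (sigma e d \<Theta>)"
proof -
  have invE: "invertible E" using th by (rule theta_inv)
  note mi = minv[OF invE]
  have "(E ** Dm) ** (Dm ** matrix_inv E) = mat 1"
    by (simp add: matrix_mul_assoc[symmetric] r1[OF DD] mi)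
  then have inv2: "matrix_inv (E ** Dm) = Dm ** matrix_inv E" by (rule minv_unique)
  have "sigma e d (box_j \<Theta>) = map_box ((*v) ((E ** Dm) ** Sig_mat e d ** (Dm ** matrix_inv E))) (box_j \<Theta>)"
    using sigma_eq[OF theta_j[OF th], of e d] inv2 by simp
  also have "(E ** Dm) ** Sig_mat e d ** (Dm ** matrix_inv E) = E ** Sig_mat e d ** matrix_inv E"
    by (simp add: matrix_mul_assoc[symmetric] S2r)
  finally show ?thesis by (simp add: sigma_eq[OF th] map_box_j)
qed

lemma P3:
  assumes th: "theta_basis \<Theta> E"
  shows "box_i (sigma e d \<Theta>) = sigma (-e) (-d) (box_i \<Theta>)"
proof -
  have invE: "invertible E" using th by (rule theta_inv)
  note mi = minv[OF invE]
  have "(E ** Mm) ** (Mi ** matrix_inv E) = mat 1"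
    by (simp add: matrix_mul_assoc[symmetric] r1[OF MMi] mi)
  then have inv2: "matrix_inv (E ** Mm) = Mi ** matrix_inv E" by (rule minv_unique)
  have "sigma (-e) (-d) (box_i \<Theta>) = map_box ((*v) ((E ** Mm) ** Sig_mat (-e) (-d) ** (Mi ** matrix_inv E))) (box_i \<Theta>)"
    using sigma_eq[OF theta_i[OF th], of "-e" "-d"] inv2 by simp
  also have "(E ** Mm) ** Sig_mat (-e) (-d) ** (Mi ** matrix_inv E) = E ** Sig_mat e d ** matrix_inv E"
    by (simp add: matrix_mul_assoc[symmetric] S3r)
  finally show ?thesis by (simp add: sigma_eq[OF th] map_box_i)
qed

lemma sigma_over:
  assumes om: "overmarked \<Theta>"
  shows "overmarked (sigma e d \<Theta>)"
proof -
  obtain E where th: "theta_basis \<Theta> E" using theta_exists[OF om] by blast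
  have invE: "invertible E" using th by (rule theta_inv)
  have invG: "invertible (E ** Sig_mat e d ** matrix_inv E)"
    by (intro invertible_mult invE invSig) (metis invertible_def minv[OF invE])
  show ?thesis unfolding sigma_eq[OF th] by (rule over_map[OF om invG])
qed


lemma pointwise:
  assumes om: "overmarked \<Theta>"
  shows "sigma e d (box_j \<Theta>) = box_j (sigma e d \<Theta>)"
    "sigma (-e) (-d) (sigma e d \<Theta>) = \<Theta>"
    "sigma (-e) (-d) (sigma e d (box_j \<Theta>)) = box_j \<Theta>"
    "box_i (sigma e d \<Theta>) = sigma (-e) (-d) (box_i \<Theta>)"
    "box_i (sigma e d (box_j \<Theta>)) = sigma (-e) (-d) (box_i (box_j \<Theta>))"
proof -
  obtain E where th: "theta_basis \<Theta> E" using theta_exists[OF om] by blast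
  have thj: "theta_basis (box_j \<Theta>) (E ** Dm)" by (rule theta_j[OF th])
  show "sigma e d (box_j \<Theta>) = box_j (sigma e d \<Theta>)" by (rule P2[OF th])
  show "sigma (-e) (-d) (sigma e d \<Theta>) = \<Theta>" by (rule P1[OF th])
  show "sigma (-e) (-d) (sigma e d (box_j \<Theta>)) = box_j \<Theta>" by (rule P1[OF thj])
  show "box_i (sigma e d \<Theta>) = sigma (-e) (-d) (box_i \<Theta>)" by (rule P3[OF th])
  show "box_i (sigma e d (box_j \<Theta>)) = sigma (-e) (-d) (box_i (box_j \<Theta>))" by (rule P3[OF thj])
qed

lemma marked_sigma:
  assumes "M \<in> marked_boxes"
  shows "on_marked (sigma e d) M \<in> marked_boxes"
proof -
  obtain \<Theta> where M: "M = {\<Theta>, box_j \<Theta>}" and om: "overmarked \<Theta>"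
    using assms unfolding marked_boxes_def by blast
  have "on_marked (sigma e d) M = {sigma e d \<Theta>, box_j (sigma e d \<Theta>)}"
    unfolding M on_marked_def using pointwise(1)[OF om] by simp
  then show ?thesis unfolding marked_boxes_def using sigma_over[OF om] by blast
qed

lemma marked_inv:
  assumes "M \<in> marked_boxes"
  shows "on_marked (sigma (-e) (-d)) (on_marked (sigma e d) M) = M"
proof -
  obtain \<Theta> where M: "M = {\<Theta>, box_j \<Theta>}" and om: "overmarked \<Theta>"
    using assms unfolding marked_boxes_def by blast
  show ?thesis unfolding M on_marked_def using pointwise(2,3)[OF om] by simp
qed

lemma marked_i:
  assumes "M \<in> marked_boxes"
  shows "on_marked box_i (on_marked (sigma e d) M) = on_marked (sigma (-e) (-d)) (on_marked box_i M)"
proof -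
  obtain \<Theta> where M: "M = {\<Theta>, box_j \<Theta>}" and om: "overmarked \<Theta>"
    using assms unfolding marked_boxes_def by blast
  show ?thesis unfolding M on_marked_def using pointwise(4,5)[OF om] by simp
qed

theorem lemma7p3:
  fixes \<epsilon> \<delta> :: real
  shows "(\<forall>M\<in>marked_boxes.
            on_marked (sigma \<epsilon> \<delta>) M \<in> marked_boxes \<and>
            on_marked (sigma (-\<epsilon>) (-\<delta>)) M \<in> marked_boxes \<and>
            on_marked (sigma (-\<epsilon>) (-\<delta>)) (on_marked (sigma \<epsilon> \<delta>) M) = M \<and>
            on_marked (sigma \<epsilon> \<delta>) (on_marked (sigma (-\<epsilon>) (-\<delta>)) M) = M) \<and>
         (\<forall>M\<in>marked_boxes.
            on_marked box_i (on_marked (sigma \<epsilon> \<delta>) M) =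
            on_marked (sigma (-\<epsilon>) (-\<delta>)) (on_marked box_i M))"
proof (intro conjI ballI)
  fix M assume M: "M \<in> marked_boxes"
  show "on_marked (sigma \<epsilon> \<delta>) M \<in> marked_boxes" by (rule marked_sigma[OF M])
  show "on_marked (sigma (-\<epsilon>) (-\<delta>)) M \<in> marked_boxes" by (rule marked_sigma[OF M])
  show "on_marked (sigma (-\<epsilon>) (-\<delta>)) (on_marked (sigma \<epsilon> \<delta>) M) = M" by (rule marked_inv[OF M])
  show "on_marked (sigma \<epsilon> \<delta>) (on_marked (sigma (-\<epsilon>) (-\<delta>)) M) = M"
    using marked_inv[OF M, of "-\<epsilon>" "-\<delta>"] by simp
  show "on_marked box_i (on_marked (sigma \<epsilon> \<delta>) M) = on_marked (sigma (-\<epsilon>) (-\<delta>)) (on_marked box_i M)"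
    by (rule marked_i[OF M])
qed

end
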